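(* A regular Hausdorff space $X$ has a base of countable order if and only if $\mathcal{F}(X)$ has a base of countable order.
   Context: $\mathcal{F}(X)$ is the set of nonempty finite subsets of $X$ with the Vietoris topology (base: $\langle U_1,\dots,U_k\rangle=\{A: A\subset\bigcup_i U_i,\ A\cap U_j\neq\emptyset\ \forall j\}$, $U_i$ open in $X$). A space $Y$ has a base of countable order (BCO) if there is a sequence $\{\mathcal{B}_n\}$ of bases of $Y$ such that whenever $x\in b_n\in\mathcal{B}_n$ for all $n$ and $\{b_n\}$ is decreasing, $\{b_n\}$ is a neighborhood base at $x$. *)

theory Defs
  imports "HOL-Analysis.Analysis"
begin

definition fin_subsets :: "'a topology \<Rightarrow> 'a set set" where
  "fin_subsets X = {A. finite A \<and> A \<noteq> {} \<and> A \<subseteq> topspace X}"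

definition vietoris_base :: "'a topology \<Rightarrow> 'a set set set" where
  "vietoris_base X =
     {{A \<in> fin_subsets X. A \<subseteq> \<Union>\<U> \<and> (\<forall>U\<in>\<U>. A \<inter> U \<noteq> {})} | \<U>.
        finite \<U> \<and> \<U> \<noteq> {} \<and> (\<forall>U\<in>\<U>. openin X U)}"

definition vietoris_fin :: "'a topology \<Rightarrow> 'a set topology" where
  "vietoris_fin X = topology_generated_by (vietoris_base X)"

definition is_base :: "'a topology \<Rightarrow> 'a set set \<Rightarrow> bool" where
  "is_base Y \<B> \<longleftrightarrow> (\<forall>b\<in>\<B>. openin Y b) \<and>
     (\<forall>W x. openin Y W \<and> x \<in> W \<longrightarrow> (\<exists>b\<in>\<B>. x \<in> b \<and> b \<subseteq> W))"

definition has_BCO :: "'a topology \<Rightarrow> bool" where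
  "has_BCO Y \<longleftrightarrow> (\<exists>\<B> :: nat \<Rightarrow> 'a set set. (\<forall>n. is_base Y (\<B> n)) \<and>
     (\<forall>x b. x \<in> topspace Y \<and> (\<forall>n. x \<in> b n \<and> b n \<in> \<B> n) \<and> (\<forall>n. b (Suc n) \<subseteq> b n)
        \<longrightarrow> (\<forall>W. openin Y W \<and> x \<in> W \<longrightarrow> (\<exists>n. b n \<subseteq> W))))"

end

theory Submission
  imports Defs
begin


definition vset :: "'a topology \<Rightarrow> 'a set set \<Rightarrow> 'a set set" where
  "vset X \<U> = {A \<in> fin_subsets X. A \<subseteq> \<Union>\<U> \<and> (\<forall>U\<in>\<U>. A \<inter> U \<noteq> {})}"

lemma vietoris_base_alt:
  "vietoris_base X = {vset X \<U> | \<U>. finite \<U> \<and> \<U> \<noteq> {} \<and> (\<forall>U\<in>\<U>. openin X U)}"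
  unfolding vietoris_base_def vset_def by simp

lemma vset_open:
  assumes "finite \<U>" "\<U> \<noteq> {}" "\<forall>U\<in>\<U>. openin X U"
  shows "openin (vietoris_fin X) (vset X \<U>)"
  unfolding vietoris_fin_def
  by (rule topology_generated_by_Basis) (use assms in \<open>auto simp: vietoris_base_alt\<close>)

lemma topspace_vf: "topspace (vietoris_fin X) = fin_subsets X"
proof -
  have "\<Union>(vietoris_base X) = fin_subsets X"
  proof
    show "\<Union>(vietoris_base X) \<subseteq> fin_subsets X"
      by (auto simp: vietoris_base_alt vset_def)
    show "fin_subsets X \<subseteq> \<Union>(vietoris_base X)"
    proof
      fix A assume A: "A \<in> fin_subsets X"
      have "vset X {topspace X} \<in> vietoris_base X"
        by (auto simp: vietoris_base_alt intro!: exI[of _ "{topspace X}"])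
      moreover have "A \<in> vset X {topspace X}"
        using A by (auto simp: vset_def fin_subsets_def)
      ultimately show "A \<in> \<Union>(vietoris_base X)" by blast
    qed
  qed
  then show ?thesis unfolding vietoris_fin_def by simp
qed

definition Gs :: "'a topology \<Rightarrow> 'a set set \<Rightarrow> 'a \<Rightarrow> 'a set" where
  "Gs X \<V> a = topspace X \<inter> \<Inter>{V\<in>\<V>. a \<in> V}"

lemma Gs_open: "finite \<V> \<Longrightarrow> \<forall>V\<in>\<V>. openin X V \<Longrightarrow> openin X (Gs X \<V> a)"
  unfolding Gs_def by (rule openin_Int_Inter) auto

lemma Gs_mono: "\<V>1 \<subseteq> \<V>2 \<Longrightarrow> Gs X \<V>2 a \<subseteq> Gs X \<V>1 a"
  unfolding Gs_def by auto

lemma Gs_mem: "A \<in> vset X \<V> \<Longrightarrow> a \<in> A \<Longrightarrow> a \<in> Gs X \<V> a"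
  unfolding Gs_def vset_def fin_subsets_def by auto

lemma shrink:
  assumes A: "A \<in> vset X \<V>"
    and h1: "\<forall>W\<in>\<W>. \<exists>a\<in>A. W \<subseteq> Gs X \<V> a"
    and h2: "\<forall>a\<in>A. \<exists>W\<in>\<W>. W \<subseteq> Gs X \<V> a"
  shows "vset X \<W> \<subseteq> vset X \<V>"
proof
  fix S assume S: "S \<in> vset X \<W>"
  have "S \<subseteq> \<Union>\<V>"
  proof
    fix s assume "s \<in> S"
    then obtain W where W: "W \<in> \<W>" "s \<in> W" using S by (auto simp: vset_def)
    then obtain a where a: "a \<in> A" "W \<subseteq> Gs X \<V> a" using h1 by blast
    then obtain V where "V \<in> \<V>" "a \<in> V" using A by (auto simp: vset_def)
    then show "s \<in> \<Union>\<V>" using a W by (auto simp: Gs_def)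
  qed
  moreover have "S \<inter> V \<noteq> {}" if V: "V \<in> \<V>" for V
  proof -
    obtain a where a: "a \<in> A" "a \<in> V" using A V by (auto simp: vset_def)
    then obtain W where W: "W \<in> \<W>" "W \<subseteq> Gs X \<V> a" using h2 by blast
    have "W \<subseteq> V" using W a V by (auto simp: Gs_def)
    moreover have "S \<inter> W \<noteq> {}" using S W by (auto simp: vset_def)
    ultimately show ?thesis by blast
  qed
  ultimately show "S \<in> vset X \<V>" using S by (auto simp: vset_def)
qed

lemma vf_base:
  assumes "openin (vietoris_fin X) Ob" "A \<in> Ob"
  shows "\<exists>\<V>. finite \<V> \<and> \<V> \<noteq> {} \<and> (\<forall>V\<in>\<V>. openin X V) \<and> A \<in> vset X \<V> \<and> vset X \<V> \<subseteq> Ob"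
proof -
  have g: "generate_topology_on (vietoris_base X) Ob"
    using assms(1) unfolding vietoris_fin_def openin_topology_generated_by_iff .
  have "\<forall>A\<in>Ob. \<exists>\<V>. finite \<V> \<and> \<V> \<noteq> {} \<and> (\<forall>V\<in>\<V>. openin X V) \<and> A \<in> vset X \<V> \<and> vset X \<V> \<subseteq> Ob"
    using g
  proof (induction rule: generate_topology_on.induct)
    case Empty
    then show ?case by simp
  next
    case (Int s t)
    show ?case
    proof
      fix A assume "A \<in> s \<inter> t"
      then have As: "A \<in> s" and At: "A \<in> t" by auto
      obtain \<V>1 where v1: "finite \<V>1" "\<V>1 \<noteq> {}" "\<forall>V\<in>\<V>1. openin X V" "A \<in> vset X \<V>1" "vset X \<V>1 \<subseteq> s"
        using bspec[OF Int.IH(1) As] by blast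
      obtain \<V>2 where v2: "finite \<V>2" "\<V>2 \<noteq> {}" "\<forall>V\<in>\<V>2. openin X V" "A \<in> vset X \<V>2" "vset X \<V>2 \<subseteq> t"
        using bspec[OF Int.IH(2) At] by blast
      define \<W> where "\<W> = (\<lambda>a. Gs X (\<V>1 \<union> \<V>2) a) ` A"
      have Af: "finite A" "A \<noteq> {}" "A \<subseteq> topspace X"
        using v1(4) by (auto simp: vset_def fin_subsets_def)
      have A12: "A \<in> vset X (\<V>1 \<union> \<V>2)" using v1(4) v2(4) by (auto simp: vset_def)
      have fin12: "finite (\<V>1 \<union> \<V>2)" using v1(1) v2(1) by simp
      have op12: "\<forall>V\<in>\<V>1 \<union> \<V>2. openin X V" using v1(3) v2(3) by blast
      have Wf: "finite \<W>" "\<W> \<noteq> {}" "\<forall>W\<in>\<W>. openin X W"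
        using Af(1,2) Gs_open[OF fin12 op12] unfolding \<W>_def by auto
      have AW: "A \<in> vset X \<W>"
      proof -
        have "A \<subseteq> \<Union>\<W>" using Gs_mem[OF A12] unfolding \<W>_def by blast
        moreover have "\<forall>W\<in>\<W>. A \<inter> W \<noteq> {}" using Gs_mem[OF A12] unfolding \<W>_def by blast
        ultimately show ?thesis using v1(4) unfolding vset_def by blast
      qed
      have "vset X \<W> \<subseteq> vset X \<V>1"
      proof (rule shrink[OF v1(4)])
        show "\<forall>W\<in>\<W>. \<exists>a\<in>A. W \<subseteq> Gs X \<V>1 a"
          unfolding \<W>_def using Gs_mono[of \<V>1 "\<V>1 \<union> \<V>2" X] by blast
        show "\<forall>a\<in>A. \<exists>W\<in>\<W>. W \<subseteq> Gs X \<V>1 a"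
          unfolding \<W>_def using Gs_mono[of \<V>1 "\<V>1 \<union> \<V>2" X] by blast
      qed
      moreover have "vset X \<W> \<subseteq> vset X \<V>2"
      proof (rule shrink[OF v2(4)])
        show "\<forall>W\<in>\<W>. \<exists>a\<in>A. W \<subseteq> Gs X \<V>2 a"
          unfolding \<W>_def using Gs_mono[of \<V>2 "\<V>1 \<union> \<V>2" X] by blast
        show "\<forall>a\<in>A. \<exists>W\<in>\<W>. W \<subseteq> Gs X \<V>2 a"
          unfolding \<W>_def using Gs_mono[of \<V>2 "\<V>1 \<union> \<V>2" X] by blast
      qed
      ultimately have sub: "vset X \<W> \<subseteq> s \<inter> t" using v1(5) v2(5) by blast
      show "\<exists>\<V>. finite \<V> \<and> \<V> \<noteq> {} \<and> (\<forall>V\<in>\<V>. openin X V) \<and> A \<in> vset X \<V> \<and> vset X \<V> \<subseteq> s \<inter> t"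
        by (rule exI[of _ \<W>]) (use Wf AW sub in auto)
    qed
  next
    case (UN K)
    show ?case
    proof
      fix A assume "A \<in> \<Union>K"
      then obtain k where k: "k \<in> K" "A \<in> k" by blast
      then obtain \<V> where "finite \<V> \<and> \<V> \<noteq> {} \<and> (\<forall>V\<in>\<V>. openin X V) \<and> A \<in> vset X \<V> \<and> vset X \<V> \<subseteq> k"
        using UN.IH by meson
      then show "\<exists>\<V>. finite \<V> \<and> \<V> \<noteq> {} \<and> (\<forall>V\<in>\<V>. openin X V) \<and> A \<in> vset X \<V> \<and> vset X \<V> \<subseteq> \<Union>K"
        using k by blast
    qed
  next
    case (Basis s)
    then obtain \<U> where "s = vset X \<U>" "finite \<U>" "\<U> \<noteq> {}" "\<forall>U\<in>\<U>. openin X U"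
      unfolding vietoris_base_alt by blast
    then show ?case by blast
  qed
  then show ?thesis using assms(2) by blast
qed



definition lst :: "'b rel \<Rightarrow> 'b set \<Rightarrow> 'b" where
  "lst r Q = (SOME m. m \<in> Q \<and> (\<forall>q\<in>Q. (m, q) \<in> r))"

lemma lst_prop:
  assumes r: "well_order_on UNIV r" and Q: "Q \<noteq> {}"
  shows "lst r Q \<in> Q \<and> (\<forall>q\<in>Q. (lst r Q, q) \<in> r)"
proof -
  have wf: "wf (r - Id)" and lin: "linear_order_on UNIV r"
    using r unfolding well_order_on_def by auto
  obtain x where "x \<in> Q" using Q by blast
  then obtain z where z: "z \<in> Q" "\<forall>y. (y, z) \<in> r - Id \<longrightarrow> y \<notin> Q"
    using wf unfolding wf_eq_minimal by metis
  have tot: "total_on UNIV r" and rf: "refl_on UNIV r"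
    using lin unfolding linear_order_on_def partial_order_on_def preorder_on_def by auto
  have "\<forall>q\<in>Q. (z, q) \<in> r"
  proof
    fix q assume q: "q \<in> Q"
    show "(z, q) \<in> r"
    proof (cases "q = z")
      case True then show ?thesis using rf by (simp add: refl_on_def)
    next
      case False
      then have "(q, z) \<notin> r" using z q by blast
      then show ?thesis using tot False unfolding total_on_def by blast
    qed
  qed
  then have "\<exists>m. m \<in> Q \<and> (\<forall>q\<in>Q. (m, q) \<in> r)" using z by blast
  then show ?thesis unfolding lst_def by (rule someI_ex)
qed

lemma stab:
  assumes r: "well_order_on UNIV r" and h: "\<forall>n\<ge>N. (a (Suc n), a n) \<in> r"
  shows "\<exists>K\<ge>N. \<forall>n\<ge>K. a n = a K"
proof -
  have wf: "wf (r - Id)" and lin: "linear_order_on UNIV r"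
    using r unfolding well_order_on_def by auto
  have tr: "trans r" and rf: "refl_on UNIV r"
    using lin unfolding linear_order_on_def partial_order_on_def preorder_on_def by auto
  have "a N \<in> a ` {N..}" by simp
  then obtain z where z: "z \<in> a ` {N..}" "\<forall>y. (y, z) \<in> r - Id \<longrightarrow> y \<notin> a ` {N..}"
    using wf unfolding wf_eq_minimal by metis
  then obtain k where k: "k \<ge> N" "z = a k" by auto
  have le: "(a n, a k) \<in> r" if "n \<ge> k" for n
    using that
  proof (induction n)
    case 0
    then show ?case using rf by (simp add: refl_on_def)
  next
    case (Suc n)
    show ?case
    proof (cases "Suc n = k")
      case True then show ?thesis using rf by (simp add: refl_on_def)
    next
      case False
      then have "n \<ge> k" using Suc.prems by simp
      then have "(a n, a k) \<in> r" using Suc.IH by simp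
      moreover have "(a (Suc n), a n) \<in> r" using h \<open>n \<ge> k\<close> k(1) by simp
      ultimately show ?thesis using tr by (meson transD)
    qed
  qed
  have "\<forall>n\<ge>k. a n = a k"
  proof (intro allI impI)
    fix n assume "n \<ge> k"
    then have "(a n, a k) \<in> r" "a n \<in> a ` {N..}" using le k(1) by auto
    show "a n = a k"
    proof (rule ccontr)
      assume ne: "a n \<noteq> a k"
      have "(a n, z) \<in> r - Id" using \<open>(a n, a k) \<in> r\<close> ne k(2) by auto
      then show False using z(2) \<open>a n \<in> a ` {N..}\<close> by blast
    qed
  qed
  then show ?thesis using k(1) by blast
qed

fun Fch :: "'b set rel \<Rightarrow> (nat \<Rightarrow> 'b set set) \<Rightarrow> 'b \<Rightarrow> nat \<Rightarrow> 'b set" where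
  "Fch r C z 0 = lst r {c \<in> C 0. z \<in> c}"
| "Fch r C z (Suc n) = lst r {c \<in> C (Suc n). z \<in> c \<and> c \<subseteq> Fch r C z n}"

lemma Fch_mem:
  assumes r: "well_order_on UNIV r" and C: "\<forall>n. is_base Z (C n)" and z: "z \<in> topspace Z"
  shows "Fch r C z n \<in> C n \<and> z \<in> Fch r C z n"
proof (induction n)
  case 0
  have "\<exists>b\<in>C 0. z \<in> b \<and> b \<subseteq> topspace Z"
    using C z unfolding is_base_def by blast
  then have "{c \<in> C 0. z \<in> c} \<noteq> {}" (is "?Q \<noteq> {}") by blast
  then have "lst r {c \<in> C 0. z \<in> c} \<in> {c \<in> C 0. z \<in> c}" by (rule lst_prop[OF r, THEN conjunct1])
  then show ?case by simp
next
  case (Suc n)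
  have "openin Z (Fch r C z n)" using Suc.IH C unfolding is_base_def by blast
  then have "\<exists>b\<in>C (Suc n). z \<in> b \<and> b \<subseteq> Fch r C z n"
    using C Suc.IH unfolding is_base_def by blast
  then have "{c \<in> C (Suc n). z \<in> c \<and> c \<subseteq> Fch r C z n} \<noteq> {}" (is "?Q \<noteq> {}") by blast
  then have "lst r {c \<in> C (Suc n). z \<in> c \<and> c \<subseteq> Fch r C z n} \<in> {c \<in> C (Suc n). z \<in> c \<and> c \<subseteq> Fch r C z n}" by (rule lst_prop[OF r, THEN conjunct1])
  then show ?case by simp
qed

lemma Fch_sub:
  assumes r: "well_order_on UNIV r" and C: "\<forall>n. is_base Z (C n)" and z: "z \<in> topspace Z"
  shows "Fch r C z (Suc n) \<subseteq> Fch r C z n"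
proof -
  have "openin Z (Fch r C z n)" using Fch_mem[OF r C z] C unfolding is_base_def by blast
  then have "\<exists>b\<in>C (Suc n). z \<in> b \<and> b \<subseteq> Fch r C z n"
    using C Fch_mem[OF r C z] unfolding is_base_def by blast
  then have "{c \<in> C (Suc n). z \<in> c \<and> c \<subseteq> Fch r C z n} \<noteq> {}" (is "?Q \<noteq> {}") by blast
  then have "lst r {c \<in> C (Suc n). z \<in> c \<and> c \<subseteq> Fch r C z n} \<in> {c \<in> C (Suc n). z \<in> c \<and> c \<subseteq> Fch r C z n}" by (rule lst_prop[OF r, THEN conjunct1])
  then show ?thesis by simp
qed

lemma Fch_mono:
  assumes r: "well_order_on UNIV r" and C: "\<forall>n. is_base Z (C n)" and z: "z \<in> topspace Z"
  shows "m \<le> n \<Longrightarrow> Fch r C z n \<subseteq> Fch r C z m"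
proof (induction n)
  case 0 then show ?case by simp
next
  case (Suc n)
  then show ?case using Fch_sub[OF r C z, of n] by (cases "m = Suc n") auto
qed



lemma BCO_pullback:
  fixes f :: "'a \<Rightarrow> 'b" and Z :: "'b topology"
  assumes bco: "has_BCO Z"
    and fts: "\<forall>x\<in>topspace X. f x \<in> topspace Z"
    and cont: "\<forall>Ob. openin Z Ob \<longrightarrow> openin X {x \<in> topspace X. f x \<in> Ob}"
    and emb: "\<forall>W x. openin X W \<and> x \<in> W \<longrightarrow> (\<exists>Ob. openin Z Ob \<and> f x \<in> Ob \<and> {y \<in> topspace X. f y \<in> Ob} \<subseteq> W)"
  shows "has_BCO X"
proof -
  obtain C where Cb: "\<forall>n. is_base Z (C n)" and
    Cc: "\<forall>x b. x \<in> topspace Z \<and> (\<forall>n. x \<in> b n \<and> b n \<in> C n) \<and> (\<forall>n. b (Suc n) \<subseteq> b n)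
        \<longrightarrow> (\<forall>W. openin Z W \<and> x \<in> W \<longrightarrow> (\<exists>n. b n \<subseteq> W))"
    using bco unfolding has_BCO_def by (elim exE conjE)
  obtain r :: "'b set rel" where r: "well_order_on UNIV r" using well_order_on by blast
  define s where "s = (\<lambda>Ob. {x \<in> topspace X. f x \<in> Ob})"
  define F where "F = Fch r C"
  have Fmem: "F z n \<in> C n" "z \<in> F z n" if "z \<in> topspace Z" for z n
    using Fch_mem[OF r Cb that] unfolding F_def by auto
  have Fmono: "F z n \<subseteq> F z m" if "z \<in> topspace Z" "m \<le> n" for z n m
    using Fch_mono[OF r Cb that(1) that(2)] unfolding F_def .
  have Fopen: "openin Z (F z n)" if "z \<in> topspace Z" for z n
    using Fmem(1)[OF that] Cb unfolding is_base_def by blast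
  have Fconv: "\<exists>m. F z m \<subseteq> Ob" if "z \<in> topspace Z" "openin Z Ob" "z \<in> Ob" for z Ob
  proof -
    have "\<forall>n. z \<in> F z n \<and> F z n \<in> C n" using Fmem[OF that(1)] by blast
    moreover have "\<forall>n. F z (Suc n) \<subseteq> F z n" using Fmono[OF that(1)] by simp
    ultimately show ?thesis using Cc[rule_format, of z "F z" Ob] that by blast
  qed
  have F0: "F z 0 = lst r {c \<in> C 0. z \<in> c}" for z unfolding F_def by simp
  have FS: "F z (Suc n) = lst r {c \<in> C (Suc n). z \<in> c \<and> c \<subseteq> F z n}" for z n unfolding F_def by simp
  define B where "B = (\<lambda>n. {s (F (f z) m) | m z. n \<le> m \<and> z \<in> topspace X})"
  have Bbase: "is_base X (B n)" for n
    unfolding is_base_def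
  proof (intro conjI allI impI ballI)
    fix b assume "b \<in> B n"
    then obtain m z where "b = s (F (f z) m)" "z \<in> topspace X" unfolding B_def by blast
    then show "openin X b" using cont[rule_format, OF Fopen[of "f z" m]] fts unfolding s_def by simp
  next
    fix W x assume Wx: "openin X W \<and> x \<in> W"
    then have x: "x \<in> topspace X" using openin_subset by blast
    obtain Ob where Ob: "openin Z Ob" "f x \<in> Ob" "s Ob \<subseteq> W" using emb[rule_format, of W x] Wx unfolding s_def by blast
    obtain m where m: "F (f x) m \<subseteq> Ob" using Fconv[OF _ Ob(1,2)] fts x by blast
    have fx: "f x \<in> topspace Z" using fts x by blast
    have "F (f x) (max m n) \<subseteq> F (f x) m" using Fmono[OF fx] by simp
    then have "s (F (f x) (max m n)) \<subseteq> W" using m Ob(3) unfolding s_def by blast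
    moreover have "x \<in> s (F (f x) (max m n))" using Fmem(2)[OF fx] x unfolding s_def by blast
    moreover have "s (F (f x) (max m n)) \<in> B n" unfolding B_def using x by (intro CollectI exI[of _ "max m n"] exI[of _ x]) simp
    ultimately show "\<exists>b\<in>B n. x \<in> b \<and> b \<subseteq> W" by blast
  qed
  have Bbco: "\<forall>W. openin X W \<and> x \<in> W \<longrightarrow> (\<exists>n. b n \<subseteq> W)"
    if x: "x \<in> topspace X" and bn: "\<forall>n. x \<in> b n \<and> b n \<in> B n" and dec: "\<forall>n. b (Suc n) \<subseteq> b n" for x b
  proof (intro allI impI)
    fix W assume W: "openin X W \<and> x \<in> W"
    have "\<forall>n. \<exists>m z. n \<le> m \<and> z \<in> topspace X \<and> b n = s (F (f z) m)"
      using bn unfolding B_def by blast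
    then obtain m z where mz: "\<forall>n. n \<le> m n \<and> z n \<in> topspace X \<and> b n = s (F (f (z n)) (m n))"
      by metis
    have fz: "f (z n) \<in> topspace Z" for n using mz fts by blast
    have key: "f (z (Suc n)) \<in> F (f (z n)) j" if "j \<le> m n" for n j
    proof -
      have "z (Suc n) \<in> b (Suc n)" using mz Fmem(2)[OF fz] unfolding s_def by blast
      then have "z (Suc n) \<in> b n" using dec by blast
      then have "f (z (Suc n)) \<in> F (f (z n)) (m n)" using mz unfolding s_def by blast
      then show ?thesis using Fmono[OF fz that] by blast
    qed
    have stabj: "\<exists>K\<ge>j. \<forall>n\<ge>K. F (f (z n)) j = F (f (z K)) j" for j
    proof (induction j)
      case 0
      have "\<forall>n\<ge>0. (F (f (z (Suc n))) 0, F (f (z n)) 0) \<in> r"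
      proof (intro allI impI)
        fix n :: nat
        have "F (f (z n)) 0 \<in> {c \<in> C 0. f (z (Suc n)) \<in> c}"
          using Fmem(1)[OF fz] key[of 0 n] by simp
        then have "{c \<in> C 0. f (z (Suc n)) \<in> c} \<noteq> {}" "F (f (z n)) 0 \<in> {c \<in> C 0. f (z (Suc n)) \<in> c}" by auto
        then show "(F (f (z (Suc n))) 0, F (f (z n)) 0) \<in> r"
          unfolding F0 using lst_prop[OF r, of "{c \<in> C 0. f (z (Suc n)) \<in> c}"] by blast
      qed
      then show ?case by (rule stab[OF r, of 0 "\<lambda>n. F (f (z n)) 0"])
    next
      case (Suc j)
      then obtain K where K: "K \<ge> j" "\<forall>n\<ge>K. F (f (z n)) j = F (f (z K)) j" by blast
      define N where "N = max K (Suc j)"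
      have "\<forall>n\<ge>N. (F (f (z (Suc n))) (Suc j), F (f (z n)) (Suc j)) \<in> r"
      proof (intro allI impI)
        fix n assume n: "n \<ge> N"
        let ?Q = "{c \<in> C (Suc j). f (z (Suc n)) \<in> c \<and> c \<subseteq> F (f (z (Suc n))) j}"
        have "Suc j \<le> m n" using n mz unfolding N_def by (meson le_trans max.boundedE)
        then have "f (z (Suc n)) \<in> F (f (z n)) (Suc j)" using key by blast
        moreover have "F (f (z n)) (Suc j) \<subseteq> F (f (z n)) j" using Fmono[OF fz] by simp
        moreover have "F (f (z n)) j = F (f (z (Suc n))) j"
        proof -
          have "n \<ge> K" using n unfolding N_def by simp
          then have "F (f (z n)) j = F (f (z K)) j" "F (f (z (Suc n))) j = F (f (z K)) j"
            using K(2)[rule_format, of n] K(2)[rule_format, of "Suc n"] by auto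
          then show ?thesis by simp
        qed
        ultimately have "F (f (z n)) (Suc j) \<in> ?Q" using Fmem(1)[OF fz] by simp
        then have "?Q \<noteq> {}" "F (f (z n)) (Suc j) \<in> ?Q" by auto
        then show "(F (f (z (Suc n))) (Suc j), F (f (z n)) (Suc j)) \<in> r"
          unfolding FS using lst_prop[OF r, of ?Q] by blast
      qed
      then have "\<exists>K'\<ge>N. \<forall>n\<ge>K'. F (f (z n)) (Suc j) = F (f (z K')) (Suc j)"
        by (rule stab[OF r, of N "\<lambda>n. F (f (z n)) (Suc j)"])
      then obtain K' where K': "K' \<ge> N" "\<forall>n\<ge>K'. F (f (z n)) (Suc j) = F (f (z K')) (Suc j)"
        by blast
      have "Suc j \<le> K'" using K'(1) unfolding N_def by simp
      then show ?case using K'(2) by blast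
    qed
    then have "\<forall>j. \<exists>K. K \<ge> j \<and> (\<forall>n\<ge>K. F (f (z n)) j = F (f (z K)) j)" by blast
    from choice[OF this] obtain K where K: "\<forall>j. K j \<ge> j \<and> (\<forall>n\<ge>K j. F (f (z n)) j = F (f (z (K j))) j)"
      by blast
    define g where "g = (\<lambda>j. F (f (z (K j))) j)"
    have gC: "g j \<in> C j" for j unfolding g_def using Fmem(1)[OF fz] .
    have gx: "f x \<in> g j" for j
    proof -
      have "x \<in> b (K j)" using bn by blast
      moreover have "b (K j) = s (F (f (z (K j))) (m (K j)))" using mz by blast
      ultimately have "f x \<in> F (f (z (K j))) (m (K j))" unfolding s_def by simp
      moreover have "j \<le> m (K j)" using K mz by (meson le_trans)
      ultimately show ?thesis unfolding g_def using Fmono[OF fz] by blast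
    qed
    have gdec: "g (Suc j) \<subseteq> g j" for j
    proof -
      define n where "n = max (K j) (K (Suc j))"
      have "g (Suc j) = F (f (z n)) (Suc j)"
        unfolding g_def using K[rule_format, of "Suc j", THEN conjunct2, rule_format, of n] unfolding n_def by simp
      moreover have "g j = F (f (z n)) j"
        unfolding g_def using K[rule_format, of j, THEN conjunct2, rule_format, of n] unfolding n_def by simp
      ultimately show ?thesis using Fmono[OF fz] by simp
    qed
    obtain Ob where Ob: "openin Z Ob" "f x \<in> Ob" "s Ob \<subseteq> W" using emb[rule_format, of W x] W unfolding s_def by blast
    have "f x \<in> topspace Z" using fts x by blast
    then obtain j where j: "g j \<subseteq> Ob" using Cc[rule_format, of "f x" g Ob] gC gx gdec Ob(1,2) by blast
    have "b (K j) = s (F (f (z (K j))) (m (K j)))" using mz by blast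
    also have "\<dots> \<subseteq> s (g j)"
    proof -
      have "j \<le> m (K j)" using K mz by (meson le_trans)
      then have "F (f (z (K j))) (m (K j)) \<subseteq> g j" unfolding g_def by (rule Fmono[OF fz])
      then show ?thesis unfolding s_def by blast
    qed
    also have "\<dots> \<subseteq> s Ob" using j unfolding s_def by blast
    finally show "\<exists>n. b n \<subseteq> W" using Ob(3) by blast
  qed
  show ?thesis unfolding has_BCO_def
    by (rule exI[of _ B]) (use Bbase Bbco in blast)
qed



lemma back_dir:
  assumes "has_BCO (vietoris_fin X)"
  shows "has_BCO X"
proof (rule BCO_pullback[OF assms, of X "\<lambda>x. {x}"])
  show "\<forall>x\<in>topspace X. {x} \<in> topspace (vietoris_fin X)"
    unfolding topspace_vf fin_subsets_def by auto
  show "\<forall>Ob. openin (vietoris_fin X) Ob \<longrightarrow> openin X {x \<in> topspace X. {x} \<in> Ob}"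
  proof (intro allI impI)
    fix Ob assume Ob: "openin (vietoris_fin X) Ob"
    show "openin X {x \<in> topspace X. {x} \<in> Ob}"
    proof (subst openin_subopen, intro ballI)
      fix x assume x: "x \<in> {x \<in> topspace X. {x} \<in> Ob}"
      then obtain \<V> where V: "finite \<V>" "\<V> \<noteq> {}" "\<forall>V\<in>\<V>. openin X V" "{x} \<in> vset X \<V>" "vset X \<V> \<subseteq> Ob"
        using vf_base[OF Ob, of "{x}"] by blast
      define T where "T = topspace X \<inter> \<Inter>\<V>"
      have "openin X T" unfolding T_def using V(1,3) by (intro openin_Int_Inter) auto
      moreover have "x \<in> T" using x V(4) unfolding T_def vset_def by auto
      moreover have "T \<subseteq> {x \<in> topspace X. {x} \<in> Ob}"
      proof
        fix y assume y: "y \<in> T"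
        have "{y} \<in> vset X \<V>" using y V(2) unfolding T_def vset_def fin_subsets_def by auto
        then show "y \<in> {x \<in> topspace X. {x} \<in> Ob}" using y V(5) unfolding T_def by auto
      qed
      ultimately show "\<exists>T. openin X T \<and> x \<in> T \<and> T \<subseteq> {x \<in> topspace X. {x} \<in> Ob}" by blast
    qed
  qed
  show "\<forall>W x. openin X W \<and> x \<in> W \<longrightarrow> (\<exists>Ob. openin (vietoris_fin X) Ob \<and> {x} \<in> Ob \<and> {y \<in> topspace X. {y} \<in> Ob} \<subseteq> W)"
  proof (intro allI impI)
    fix W x assume W: "openin X W \<and> x \<in> W"
    have "openin (vietoris_fin X) (vset X {W})" using W by (intro vset_open) auto
    moreover have "{x} \<in> vset X {W}" using W openin_subset unfolding vset_def fin_subsets_def by fastforce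
    moreover have "{y \<in> topspace X. {y} \<in> vset X {W}} \<subseteq> W" unfolding vset_def by auto
    ultimately show "\<exists>Ob. openin (vietoris_fin X) Ob \<and> {x} \<in> Ob \<and> {y \<in> topspace X. {y} \<in> Ob} \<subseteq> W" by blast
  qed
qed

lemma chain_dec: "(\<forall>i<n. c (Suc i) \<subseteq> c i) \<Longrightarrow> i \<le> n \<Longrightarrow> c n \<subseteq> (c i :: 'a set)"
proof (induction n)
  case 0 then show ?case by simp
next
  case (Suc n)
  show ?case
  proof (cases "i = Suc n")
    case True then show ?thesis by simp
  next
    case False
    then have "c n \<subseteq> c i" using Suc by simp
    moreover have "c (Suc n) \<subseteq> c n" using Suc.prems by simp
    ultimately show ?thesis by blast
  qed
qed

lemma tail_BCO:
  assumes "has_BCO X"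
  shows "\<exists>R. (\<forall>n. is_base X (R n)) \<and>
    (\<forall>x b N. x \<in> topspace X \<and> (\<forall>n\<ge>N. x \<in> b n \<and> b n \<in> R n \<and> b (Suc n) \<subseteq> b n)
       \<longrightarrow> (\<forall>W. openin X W \<and> x \<in> W \<longrightarrow> (\<exists>n\<ge>N. b n \<subseteq> W)))"
proof -
  obtain B where Bb: "\<forall>n. is_base X (B n)" and
    Bc: "\<forall>x b. x \<in> topspace X \<and> (\<forall>n. x \<in> b n \<and> b n \<in> B n) \<and> (\<forall>n. b (Suc n) \<subseteq> b n)
        \<longrightarrow> (\<forall>W. openin X W \<and> x \<in> W \<longrightarrow> (\<exists>n. b n \<subseteq> W))"
    using assms unfolding has_BCO_def by (elim exE conjE)
  define R where "R = (\<lambda>n. {d. \<exists>c. (\<forall>i\<le>n. c i \<in> B i) \<and> (\<forall>i<n. c (Suc i) \<subseteq> c i) \<and> c n = d})"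
  have RB: "R n \<subseteq> B n" for n unfolding R_def by auto
  have ex: "\<forall>W x. openin X W \<and> x \<in> W \<longrightarrow> (\<exists>c. (\<forall>i\<le>n. c i \<in> B i) \<and> (\<forall>i<n. c (Suc i) \<subseteq> c i) \<and> x \<in> c n \<and> c n \<subseteq> W)" for n
  proof (induction n)
    case 0
    show ?case
    proof (intro allI impI)
      fix W x assume "openin X W \<and> x \<in> W"
      then obtain d where "d \<in> B 0" "x \<in> d" "d \<subseteq> W" using Bb[rule_format, of 0] unfolding is_base_def by blast
      then show "\<exists>c. (\<forall>i\<le>0. c i \<in> B i) \<and> (\<forall>i<0. c (Suc i) \<subseteq> c i) \<and> x \<in> c 0 \<and> c 0 \<subseteq> W"
        by (intro exI[of _ "\<lambda>_. d"]) auto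
    qed
  next
    case (Suc n)
    show ?case
    proof (intro allI impI)
      fix W x assume Wx: "openin X W \<and> x \<in> W"
      then obtain c where c: "\<forall>i\<le>n. c i \<in> B i" "\<forall>i<n. c (Suc i) \<subseteq> c i" "x \<in> c n" "c n \<subseteq> W"
        using Suc.IH Wx by (elim allE[of _ W] allE[of _ x] impE exE conjE) auto
      have "openin X (c n)" using c(1) Bb[rule_format, of n] unfolding is_base_def by blast
      then obtain d where d: "d \<in> B (Suc n)" "x \<in> d" "d \<subseteq> c n" using Bb[rule_format, of "Suc n"] c(3) unfolding is_base_def by blast
      define c' where "c' = c(Suc n := d)"
      have "\<forall>i\<le>Suc n. c' i \<in> B i" using c(1) d(1) unfolding c'_def by (simp add: le_Suc_eq)
      moreover have "\<forall>i<Suc n. c' (Suc i) \<subseteq> c' i" using c(2) d(3) unfolding c'_def by (auto simp: less_Suc_eq)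
      moreover have "x \<in> c' (Suc n) \<and> c' (Suc n) \<subseteq> W" using d c(4) unfolding c'_def by auto
      ultimately show "\<exists>c. (\<forall>i\<le>Suc n. c i \<in> B i) \<and> (\<forall>i<Suc n. c (Suc i) \<subseteq> c i) \<and> x \<in> c (Suc n) \<and> c (Suc n) \<subseteq> W"
        by (intro exI[of _ c']) blast
    qed
  qed
  have Rbase: "is_base X (R n)" for n
    unfolding is_base_def
  proof (intro conjI allI impI ballI)
    fix b assume "b \<in> R n"
    then have "b \<in> B n" using RB by blast
    then show "openin X b" using Bb[rule_format, of n] unfolding is_base_def by blast
  next
    fix W x assume Wx: "openin X W \<and> x \<in> W"
    have "\<exists>c. (\<forall>i\<le>n. c i \<in> B i) \<and> (\<forall>i<n. c (Suc i) \<subseteq> c i) \<and> x \<in> c n \<and> c n \<subseteq> W"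
      using ex[of n] Wx by blast
    then obtain c where c: "\<forall>i\<le>n. c i \<in> B i" "\<forall>i<n. c (Suc i) \<subseteq> c i" "x \<in> c n" "c n \<subseteq> W"
      by (elim exE conjE)
    have "c n \<in> R n" unfolding R_def using c(1,2) by (intro CollectI exI[of _ c]) simp
    then show "\<exists>b\<in>R n. x \<in> b \<and> b \<subseteq> W" using c(3,4) by blast
  qed
  have Rtail: "\<forall>W. openin X W \<and> x \<in> W \<longrightarrow> (\<exists>n\<ge>N. b n \<subseteq> W)"
    if x: "x \<in> topspace X" and bn: "\<forall>n\<ge>N. x \<in> b n \<and> b n \<in> R n \<and> b (Suc n) \<subseteq> b n" for x b N
  proof (intro allI impI)
    fix W assume W: "openin X W \<and> x \<in> W"
    have "b N \<in> R N" using bn by blast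
    then obtain c where c: "\<forall>i\<le>N. c i \<in> B i" "\<forall>i<N. c (Suc i) \<subseteq> c i" "c N = b N"
      unfolding R_def by blast
    define e where "e = (\<lambda>i. if i \<le> N then c i else b i)"
    have cN: "b N \<subseteq> c i" if "i \<le> N" for i using chain_dec[OF c(2) that] c(3) by simp
    have e1: "\<forall>i. x \<in> e i \<and> e i \<in> B i"
    proof
      fix i show "x \<in> e i \<and> e i \<in> B i"
      proof (cases "i \<le> N")
        case True then show ?thesis using cN[OF True] bn c(1) unfolding e_def by auto
      next
        case False
        then have "x \<in> b i \<and> b i \<in> R i" using bn by simp
        then show ?thesis using False RB[of i] unfolding e_def by auto
      qed
    qed
    have e2: "\<forall>i. e (Suc i) \<subseteq> e i"
    proof
      fix i show "e (Suc i) \<subseteq> e i"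
      proof (cases "Suc i \<le> N")
        case True then show ?thesis using c(2) unfolding e_def by auto
      next
        case False
        show ?thesis
        proof (cases "i = N")
          case True then show ?thesis using bn c(3) unfolding e_def by auto
        next
          case False2: False
          then have "i > N" using False by simp
          then show ?thesis using bn unfolding e_def by auto
        qed
      qed
    qed
    obtain n where n: "e n \<subseteq> W" using Bc[rule_format, of x e W] x e1 e2 W by blast
    show "\<exists>n\<ge>N. b n \<subseteq> W"
    proof (cases "n \<le> N")
      case True
      then have "b N \<subseteq> e n" using cN unfolding e_def by simp
      then show ?thesis using n by blast
    next
      case False
      then have "b n = e n" unfolding e_def by simp
      then show ?thesis using n False by (intro exI[of _ n]) simp
    qed
  qed
  show ?thesis by (rule exI[of _ R]) (use Rbase Rtail in blast)
qed



lemma hsep: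
  assumes H: "Hausdorff_space X" and A: "finite A" "A \<subseteq> topspace X"
  shows "\<exists>H. \<forall>a\<in>A. openin X (H a) \<and> a \<in> H a \<and> (\<forall>b\<in>A. a \<noteq> b \<longrightarrow> H a \<inter> H b = {})"
proof -
  have "\<forall>x y. \<exists>U V. x \<in> topspace X \<and> y \<in> topspace X \<and> x \<noteq> y \<longrightarrow>
      openin X U \<and> openin X V \<and> x \<in> U \<and> y \<in> V \<and> disjnt U V"
    using H unfolding Hausdorff_space_def by blast
  then obtain U V where UV: "\<forall>x y. x \<in> topspace X \<and> y \<in> topspace X \<and> x \<noteq> y \<longrightarrow>
      openin X (U x y) \<and> openin X (V x y) \<and> x \<in> U x y \<and> y \<in> V x y \<and> disjnt (U x y) (V x y)"
    by metis
  define H where "H = (\<lambda>a. topspace X \<inter> \<Inter>((\<lambda>b. U a b \<inter> V b a) ` (A - {a})))"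
  have "openin X (H a) \<and> a \<in> H a \<and> (\<forall>b\<in>A. a \<noteq> b \<longrightarrow> H a \<inter> H b = {})" if a: "a \<in> A" for a
  proof (intro conjI ballI impI)
    show "openin X (H a)" unfolding H_def
    proof (rule openin_Int_Inter)
      show "finite ((\<lambda>b. U a b \<inter> V b a) ` (A - {a}))" using A by simp
      show "openin X (topspace X)" by simp
      fix S assume "S \<in> (\<lambda>b. U a b \<inter> V b a) ` (A - {a})"
      then obtain b where b: "b \<in> A" "b \<noteq> a" "S = U a b \<inter> V b a" by blast
      then show "openin X S" using UV a A by blast
    qed
    show "a \<in> H a" unfolding H_def using UV a A by blast
    fix b assume b: "b \<in> A" "a \<noteq> b"
    have "H a \<subseteq> U a b" unfolding H_def using b by blast
    moreover have "H b \<subseteq> V a b" unfolding H_def using b a by blast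
    moreover have "disjnt (U a b) (V a b)" using UV a b A by blast
    ultimately show "H a \<inter> H b = {}" unfolding disjnt_def by blast
  qed
  then show ?thesis by blast
qed

lemma sub_part:
  assumes "finite \<W>" "\<W> \<noteq> {}" "\<forall>W\<in>\<W>. W \<subseteq> topspace X" "vset X \<W> \<subseteq> vset X \<U>" "U \<in> \<U>"
  shows "\<exists>W\<in>\<W>. W \<subseteq> U"
proof (rule ccontr)
  assume "\<not> (\<exists>W\<in>\<W>. W \<subseteq> U)"
  then have "\<forall>W\<in>\<W>. \<exists>p. p \<in> W \<and> p \<notin> U" by blast
  then have "\<exists>p. \<forall>W\<in>\<W>. p W \<in> W \<and> p W \<notin> U" by (rule bchoice)
  then obtain p where p: "\<forall>W\<in>\<W>. p W \<in> W \<and> p W \<notin> U" by (elim exE)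
  define S where "S = p ` \<W>"
  have S1: "finite S" "S \<noteq> {}" unfolding S_def using assms(1,2) by auto
  have S2: "S \<subseteq> topspace X" unfolding S_def using assms(3) p by blast
  have S3: "S \<subseteq> \<Union>\<W>" unfolding S_def using p by blast
  have S4: "\<forall>W\<in>\<W>. S \<inter> W \<noteq> {}" unfolding S_def using p by blast
  have "S \<in> vset X \<W>"
    unfolding vset_def fin_subsets_def using S1 S2 S3 S4 by blast
  then have "S \<in> vset X \<U>" using assms(4) by blast
  then have "S \<inter> U \<noteq> {}" using assms(5) unfolding vset_def by blast
  then show False using p unfolding S_def by blast
qed

lemma dec_from:
  assumes "\<forall>n\<ge>N. f (Suc n) \<subseteq> (f n :: 'a set)" "N \<le> m"
  shows "m \<le> n \<Longrightarrow> f n \<subseteq> f m"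
proof (induction n)
  case 0 then show ?case by simp
next
  case (Suc n)
  show ?case
  proof (cases "m = Suc n")
    case True then show ?thesis by simp
  next
    case False
    then have "m \<le> n" using Suc.prems by simp
    then have "f n \<subseteq> f m" using Suc.IH by simp
    moreover have "f (Suc n) \<subseteq> f n" using assms \<open>m \<le> n\<close> by simp
    ultimately show ?thesis by blast
  qed
qed

lemma eventually_const:
  fixes k :: "nat \<Rightarrow> nat"
  assumes mono: "\<And>n. k n \<le> k (Suc n)" and bnd: "\<And>n. k n \<le> M"
  shows "\<exists>N. \<forall>n\<ge>N. k n = k N"
proof -
  have fin: "finite (range k)" using bnd by (meson finite_atMost finite_subset image_subsetI atMost_iff)
  have "Max (range k) \<in> range k" using fin by (intro Max_in) auto
  then obtain N where N: "k N = Max (range k)" by auto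
  have "k n = k N" if "n \<ge> N" for n
  proof -
    have "k N \<le> k n" using lift_Suc_mono_le[of k, OF mono that] .
    moreover have "k n \<le> Max (range k)" using fin by (intro Max_ge) auto
    ultimately show ?thesis using N by simp
  qed
  then show ?thesis by blast
qed



definition disjfam :: "'a set set \<Rightarrow> bool" where
  "disjfam \<U> \<longleftrightarrow> (\<forall>U\<in>\<U>. \<forall>V\<in>\<U>. U \<noteq> V \<longrightarrow> U \<inter> V = {})"

lemma fwd_base:
  assumes Hs: "Hausdorff_space X" and Rb: "is_base X Rn"
  shows "is_base (vietoris_fin X) {vset X \<U> | \<U>. finite \<U> \<and> \<U> \<noteq> {} \<and> \<U> \<subseteq> Rn \<and> disjfam \<U>}"
  unfolding is_base_def
proof (intro conjI allI impI ballI)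
  have Ro: "openin X U" if "U \<in> Rn" for U using Rb that unfolding is_base_def by blast
  fix c assume "c \<in> {vset X \<U> | \<U>. finite \<U> \<and> \<U> \<noteq> {} \<and> \<U> \<subseteq> Rn \<and> disjfam \<U>}"
  then obtain \<U> where "c = vset X \<U>" "finite \<U>" "\<U> \<noteq> {}" "\<U> \<subseteq> Rn" by blast
  then show "openin (vietoris_fin X) c" using Ro by (auto intro!: vset_open)
next
  fix Ob A assume h: "openin (vietoris_fin X) Ob \<and> A \<in> Ob"
  obtain \<V> where V: "finite \<V>" "\<V> \<noteq> {}" "\<forall>V\<in>\<V>. openin X V" "A \<in> vset X \<V>" "vset X \<V> \<subseteq> Ob"
    using vf_base[of X Ob A] h by blast
  have Af: "finite A" "A \<noteq> {}" "A \<subseteq> topspace X" using V(4) unfolding vset_def fin_subsets_def by auto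
  obtain H where H: "\<forall>a\<in>A. openin X (H a) \<and> a \<in> H a \<and> (\<forall>b\<in>A. a \<noteq> b \<longrightarrow> H a \<inter> H b = {})"
    using hsep[OF Hs Af(1,3)] by (elim exE)
  have "\<forall>a\<in>A. \<exists>U. U \<in> Rn \<and> a \<in> U \<and> U \<subseteq> Gs X \<V> a \<inter> H a"
  proof
    fix a assume a: "a \<in> A"
    have "openin X (Gs X \<V> a \<inter> H a)" using Gs_open[OF V(1,3)] H a by blast
    moreover have "a \<in> Gs X \<V> a \<inter> H a" using Gs_mem[OF V(4) a] H a by blast
    ultimately show "\<exists>U. U \<in> Rn \<and> a \<in> U \<and> U \<subseteq> Gs X \<V> a \<inter> H a"
      using Rb unfolding is_base_def by blast
  qed
  then have "\<exists>U. \<forall>a\<in>A. U a \<in> Rn \<and> a \<in> U a \<and> U a \<subseteq> Gs X \<V> a \<inter> H a" by (rule bchoice)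
  then obtain U where U: "\<forall>a\<in>A. U a \<in> Rn \<and> a \<in> U a \<and> U a \<subseteq> Gs X \<V> a \<inter> H a" by (elim exE)
  define \<U> where "\<U> = U ` A"
  have U1: "finite \<U>" "\<U> \<noteq> {}" "\<U> \<subseteq> Rn" unfolding \<U>_def using Af U by auto
  have U2: "disjfam \<U>" unfolding disjfam_def \<U>_def
  proof (intro ballI impI)
    fix P Q assume "P \<in> U ` A" "Q \<in> U ` A" "P \<noteq> Q"
    then obtain a b where ab: "a \<in> A" "b \<in> A" "P = U a" "Q = U b" "a \<noteq> b" by blast
    then have "P \<subseteq> H a" "Q \<subseteq> H b" using U by blast+
    moreover have "H a \<inter> H b = {}" using H ab by blast
    ultimately show "P \<inter> Q = {}" by blast
  qed
  have U3: "A \<in> vset X \<U>"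
  proof -
    have "A \<subseteq> \<Union>\<U>" unfolding \<U>_def using U by blast
    moreover have "\<forall>W\<in>\<U>. A \<inter> W \<noteq> {}" unfolding \<U>_def using U by blast
    ultimately show ?thesis using V(4) unfolding vset_def by blast
  qed
  have U4: "vset X \<U> \<subseteq> vset X \<V>"
  proof (rule shrink[OF V(4)])
    show "\<forall>W\<in>\<U>. \<exists>a\<in>A. W \<subseteq> Gs X \<V> a" unfolding \<U>_def using U by blast
    show "\<forall>a\<in>A. \<exists>W\<in>\<U>. W \<subseteq> Gs X \<V> a" unfolding \<U>_def using U by blast
  qed
  have "vset X \<U> \<in> {vset X \<U> | \<U>. finite \<U> \<and> \<U> \<noteq> {} \<and> \<U> \<subseteq> Rn \<and> disjfam \<U>}"
    using U1 U2 by blast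
  then show "\<exists>b\<in>{vset X \<U> | \<U>. finite \<U> \<and> \<U> \<noteq> {} \<and> \<U> \<subseteq> Rn \<and> disjfam \<U>}. A \<in> b \<and> b \<subseteq> Ob"
    using U3 U4 V(5) by blast
qed


lemma fwd_chain:
  assumes Rb: "\<forall>n. is_base X (R n)"
    and Rt: "\<forall>x b N. x \<in> topspace X \<and> (\<forall>n\<ge>N. x \<in> b n \<and> b n \<in> R n \<and> b (Suc n) \<subseteq> b n)
       \<longrightarrow> (\<forall>W. openin X W \<and> x \<in> W \<longrightarrow> (\<exists>n\<ge>N. b n \<subseteq> W))"
    and Uh: "\<forall>n. finite (\<U> n) \<and> \<U> n \<noteq> {} \<and> \<U> n \<subseteq> R n \<and> disjfam (\<U> n) \<and> A \<in> vset X (\<U> n)"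
    and dec: "\<forall>n. vset X (\<U> (Suc n)) \<subseteq> vset X (\<U> n)"
    and Ob: "openin (vietoris_fin X) Ob" "A \<in> Ob"
  shows "\<exists>n. vset X (\<U> n) \<subseteq> Ob"
proof -
  have Af: "finite A" "A \<noteq> {}" "A \<subseteq> topspace X"
    using Uh unfolding vset_def fin_subsets_def by auto
  have Ufin: "finite (\<U> n)" for n using Uh by blast
  have Une: "\<U> n \<noteq> {}" for n using Uh by blast
  have UR: "\<U> n \<subseteq> R n" for n using Uh by blast
  have Udj: "disjfam (\<U> n)" for n using Uh by blast
  have AU: "A \<in> vset X (\<U> n)" for n using Uh by blast
  have Uop: "openin X U" if "U \<in> \<U> n" for n U
    using UR[of n] Rb that unfolding is_base_def by blast
  have Utop: "U \<subseteq> topspace X" if "U \<in> \<U> n" for n U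
    using Uop[OF that] openin_subset by blast
  have L1: "A \<inter> U \<noteq> {}" if "U \<in> \<U> n" for n U using AU[of n] that unfolding vset_def by blast
  have L1b: "A \<subseteq> \<Union>(\<U> n)" for n using AU[of n] unfolding vset_def by blast
  have uniq: "U = V" if "U \<in> \<U> n" "V \<in> \<U> n" "a \<in> U" "a \<in> V" for n U V a
    using Udj[of n] that unfolding disjfam_def by blast
  define g where "g = (\<lambda>n U. SOME W. W \<in> \<U> (Suc n) \<and> W \<subseteq> U)"
  have gp: "g n U \<in> \<U> (Suc n) \<and> g n U \<subseteq> U" if "U \<in> \<U> n" for n U
  proof -
    have "\<exists>W\<in>\<U> (Suc n). W \<subseteq> U"
      using sub_part[OF Ufin[of "Suc n"] Une[of "Suc n"] _ dec[rule_format, of n] that] Utop by blast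
    then have "\<exists>W. W \<in> \<U> (Suc n) \<and> W \<subseteq> U" by blast
    then show ?thesis unfolding g_def by (rule someI_ex)
  qed
  have ginj: "inj_on (g n) (\<U> n)" for n
  proof (rule inj_onI)
    fix U V assume UV: "U \<in> \<U> n" "V \<in> \<U> n" "g n U = g n V"
    obtain a where a: "a \<in> A" "a \<in> g n U" using L1[of "g n U" "Suc n"] gp[OF UV(1)] by blast
    have "a \<in> U" using a gp[OF UV(1)] by blast
    moreover have "a \<in> V" using a UV(3) gp[OF UV(2)] by blast
    ultimately show "U = V" using uniq UV(1,2) by blast
  qed
  have gim: "g n ` \<U> n \<subseteq> \<U> (Suc n)" for n using gp by blast
  have kmono: "card (\<U> n) \<le> card (\<U> (Suc n))" for n
    using card_inj_on_le[OF ginj gim Ufin] .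
  define h where "h = (\<lambda>U. SOME a. a \<in> A \<and> a \<in> U)"
  have hp: "h U \<in> A \<and> h U \<in> U" if "U \<in> \<U> n" for n U
  proof -
    have "\<exists>a. a \<in> A \<and> a \<in> U" using L1[OF that] by blast
    then show ?thesis unfolding h_def by (rule someI_ex)
  qed
  have kbnd: "card (\<U> n) \<le> card A" for n
  proof (rule card_inj_on_le[of h])
    show "inj_on h (\<U> n)"
    proof (rule inj_onI)
      fix U V assume UV: "U \<in> \<U> n" "V \<in> \<U> n" "h U = h V"
      then show "U = V" using hp[OF UV(1)] hp[OF UV(2)] uniq[OF UV(1,2)] by metis
    qed
    show "h ` \<U> n \<subseteq> A" using hp by blast
    show "finite A" by (rule Af(1))
  qed
  obtain N where N: "\<forall>n\<ge>N. card (\<U> n) = card (\<U> N)"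
    using eventually_const[of "\<lambda>n. card (\<U> n)", OF kmono kbnd] by blast
  have gsurj: "g n ` \<U> n = \<U> (Suc n)" if "n \<ge> N" for n
  proof (rule card_subset_eq[OF Ufin gim])
    have "card (g n ` \<U> n) = card (\<U> n)" using card_image[OF ginj] .
    also have "\<dots> = card (\<U> N)" using N that by blast
    also have "\<dots> = card (\<U> (Suc n))" using N[rule_format, of "Suc n"] that by simp
    finally show "card (g n ` \<U> n) = card (\<U> (Suc n))" .
  qed
  define P where "P = (\<lambda>n a. SOME U. U \<in> \<U> n \<and> a \<in> U)"
  have Pp: "P n a \<in> \<U> n \<and> a \<in> P n a" if "a \<in> A" for n a
  proof -
    have "\<exists>U. U \<in> \<U> n \<and> a \<in> U" using L1b[of n] that by blast
    then show ?thesis unfolding P_def by (rule someI_ex)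
  qed
  have Pdec: "P (Suc n) a \<subseteq> P n a" if "n \<ge> N" "a \<in> A" for n a
  proof -
    have "P (Suc n) a \<in> g n ` \<U> n" using Pp[OF that(2)] gsurj[OF that(1)] by blast
    then obtain U where U: "U \<in> \<U> n" "P (Suc n) a = g n U" by blast
    have "a \<in> U" using U gp[OF U(1)] Pp[OF that(2), of "Suc n"] by auto
    then have "U = P n a" using uniq[OF U(1) _ _ , of "P n a" a] Pp[OF that(2), of n] by blast
    then show ?thesis using U gp[OF U(1)] by blast
  qed
  obtain \<V> where V: "finite \<V>" "\<V> \<noteq> {}" "\<forall>V\<in>\<V>. openin X V" "A \<in> vset X \<V>" "vset X \<V> \<subseteq> Ob"
    using vf_base[OF Ob] by blast
  have "\<forall>a\<in>A. \<exists>n. n \<ge> N \<and> P n a \<subseteq> Gs X \<V> a"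
  proof
    fix a assume a: "a \<in> A"
    have c1: "a \<in> topspace X" using a Af by blast
    have c2: "\<forall>n\<ge>N. a \<in> P n a \<and> P n a \<in> R n \<and> P (Suc n) a \<subseteq> P n a"
      using Pp[OF a] UR Pdec a by blast
    have c3: "openin X (Gs X \<V> a) \<and> a \<in> Gs X \<V> a"
      using Gs_open[OF V(1,3)] Gs_mem[OF V(4) a] by blast
    show "\<exists>n. n \<ge> N \<and> P n a \<subseteq> Gs X \<V> a"
      using Rt[rule_format, where x=a and b="\<lambda>n. P n a" and N=N and W="Gs X \<V> a"] c1 c2 c3 by blast
  qed
  then have "\<exists>na. \<forall>a\<in>A. na a \<ge> N \<and> P (na a) a \<subseteq> Gs X \<V> a" by (rule bchoice)
  then obtain na where na: "\<forall>a\<in>A. na a \<ge> N \<and> P (na a) a \<subseteq> Gs X \<V> a" by (elim exE)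
  define n0 where "n0 = Max (na ` A)"
  have n0ge: "na a \<le> n0" if "a \<in> A" for a
    unfolding n0_def using Af(1) that by (intro Max_ge) auto
  have Pn0: "P n0 a \<subseteq> Gs X \<V> a" if a: "a \<in> A" for a
  proof -
    have "\<forall>n\<ge>N. P (Suc n) a \<subseteq> P n a" using Pdec a by blast
    then have "P n0 a \<subseteq> P (na a) a" using dec_from[where f="\<lambda>n. P n a" and N=N and m="na a" and n=n0] na a n0ge[OF a] by blast
    then show ?thesis using na a by blast
  qed
  have "vset X (\<U> n0) \<subseteq> vset X \<V>"
  proof (rule shrink[OF V(4)])
    show "\<forall>W\<in>\<U> n0. \<exists>a\<in>A. W \<subseteq> Gs X \<V> a"
    proof
      fix W assume W: "W \<in> \<U> n0"
      then obtain a where a: "a \<in> A" "a \<in> W" using L1[OF W] by blast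
      then have "W = P n0 a" using uniq[OF W, of "P n0 a" a] Pp[OF a(1), of n0] by blast
      then show "\<exists>a\<in>A. W \<subseteq> Gs X \<V> a" using Pn0 a(1) by blast
    qed
    show "\<forall>a\<in>A. \<exists>W\<in>\<U> n0. W \<subseteq> Gs X \<V> a" using Pp Pn0 by blast
  qed
  then show ?thesis using V(5) by blast
qed



lemma fwd_dir:
  assumes Hs: "Hausdorff_space X" and bco: "has_BCO X"
  shows "has_BCO (vietoris_fin X)"
proof -
  obtain R where Rb: "\<forall>n. is_base X (R n)" and
    Rt: "\<forall>x b N. x \<in> topspace X \<and> (\<forall>n\<ge>N. x \<in> b n \<and> b n \<in> R n \<and> b (Suc n) \<subseteq> b n)
       \<longrightarrow> (\<forall>W. openin X W \<and> x \<in> W \<longrightarrow> (\<exists>n\<ge>N. b n \<subseteq> W))"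
    using tail_BCO[OF bco] by (elim exE conjE)
  define C where "C = (\<lambda>n. {vset X \<U> | \<U>. finite \<U> \<and> \<U> \<noteq> {} \<and> \<U> \<subseteq> R n \<and> disjfam \<U>})"
  have Cb: "\<forall>n. is_base (vietoris_fin X) (C n)"
    unfolding C_def using fwd_base[OF Hs] Rb by blast
  have Cc: "\<forall>Ob. openin (vietoris_fin X) Ob \<and> A \<in> Ob \<longrightarrow> (\<exists>n. c n \<subseteq> Ob)"
    if A: "A \<in> topspace (vietoris_fin X)" and cn: "\<forall>n. A \<in> c n \<and> c n \<in> C n"
      and dec: "\<forall>n. c (Suc n) \<subseteq> c n" for A c
  proof (intro allI impI)
    fix Ob assume Ob: "openin (vietoris_fin X) Ob \<and> A \<in> Ob"
    have "\<forall>n. \<exists>\<U>. c n = vset X \<U> \<and> finite \<U> \<and> \<U> \<noteq> {} \<and> \<U> \<subseteq> R n \<and> disjfam \<U>"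
      using cn unfolding C_def by blast
    then have "\<exists>\<U>. \<forall>n. c n = vset X (\<U> n) \<and> finite (\<U> n) \<and> \<U> n \<noteq> {} \<and> \<U> n \<subseteq> R n \<and> disjfam (\<U> n)"
      by (rule choice)
    then obtain \<U> where U: "\<forall>n. c n = vset X (\<U> n) \<and> finite (\<U> n) \<and> \<U> n \<noteq> {} \<and> \<U> n \<subseteq> R n \<and> disjfam (\<U> n)"
      by (elim exE)
    have Uh: "\<forall>n. finite (\<U> n) \<and> \<U> n \<noteq> {} \<and> \<U> n \<subseteq> R n \<and> disjfam (\<U> n) \<and> A \<in> vset X (\<U> n)"
    proof
      fix n
      have "c n = vset X (\<U> n)" using U by blast
      then show "finite (\<U> n) \<and> \<U> n \<noteq> {} \<and> \<U> n \<subseteq> R n \<and> disjfam (\<U> n) \<and> A \<in> vset X (\<U> n)"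
        using U cn by metis
    qed
    have dec2: "\<forall>n. vset X (\<U> (Suc n)) \<subseteq> vset X (\<U> n)"
    proof
      fix n
      have "c n = vset X (\<U> n)" "c (Suc n) = vset X (\<U> (Suc n))" using U by blast+
      then show "vset X (\<U> (Suc n)) \<subseteq> vset X (\<U> n)" using dec by metis
    qed
    obtain n where "vset X (\<U> n) \<subseteq> Ob"
      using fwd_chain[OF Rb Rt Uh dec2, of Ob] Ob by blast
    moreover have "c n = vset X (\<U> n)" using U by blast
    ultimately show "\<exists>n. c n \<subseteq> Ob" by auto
  qed
  show ?thesis unfolding has_BCO_def
    by (rule exI[of _ C]) (use Cb Cc in blast)
qed

theorem theorem4p1:
  fixes X :: "'a topology"
  assumes "regular_space X" and "Hausdorff_space X"
  shows "has_BCO X \<longleftrightarrow> has_BCO (vietoris_fin X)"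
  using fwd_dir[OF assms(2)] back_dir[of X] by blast

end
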